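(* Let $X$ be a scattered topological space such that $\mathrm{Homeo}(X)$ is fully transitive. Then the topological group $\mathrm{Homeo}(X)$ is amenable and Roelcke-precompact.
   Context: A topological space (not assumed Hausdorff) is scattered if every nonempty subset has a point that is isolated in that subset. For scattered $X$, $\mathrm{Homeo}(X)$ is endowed with the topology of pointwise convergence on $X$, making it a Hausdorff topological group. Two points $x,y\in X$ are similar if there are neighbourhoods $U_x\ni x$, $U_y\ni y$ and a homeomorphism $h\colon U_x\to U_y$ with $h(x)=y$. $\mathrm{Homeo}(X)$ is fully transitive if for every $k$ and all $k$-tuples $(x_1,\dots,x_k)$, $(y_1,\dots,y_k)$ of pairwise distinct points with $x_i$ similar to $y_i$ for each $i$, some homeomorphism $g$ satisfies $g(x_i)=y_i$ for all $i$. Amenable: every continuous affine action on a nonempty compact convex set has a fixed point. Roelcke-precompact: for every identity neighbourhood $U$ there is a finite $F$ with $G=UFU$. *)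

theory Defs
  imports "HOL-Analysis.Analysis"
begin

definition scattered_space :: "'a topology \<Rightarrow> bool" where
  "scattered_space X \<longleftrightarrow>
     (\<forall>S. S \<subseteq> topspace X \<and> S \<noteq> {} \<longrightarrow>
        (\<exists>x\<in>S. \<exists>U. openin X U \<and> U \<inter> S = {x}))"

definition Homeo :: "'a topology \<Rightarrow> ('a \<Rightarrow> 'a) set" where
  "Homeo X = {h. homeomorphic_map X X h \<and> (\<forall>x. x \<notin> topspace X \<longrightarrow> h x = x)}"

definition pointwise_topology :: "'a topology \<Rightarrow> ('a \<Rightarrow> 'a) topology" where
  "pointwise_topology X =
     topology_generated_by
       (insert (Homeo X) {{h \<in> Homeo X. h x \<in> U} | x U. x \<in> topspace X \<and> openin X U})"

definition neighbourhood_of :: "'a topology \<Rightarrow> 'a set \<Rightarrow> 'a \<Rightarrow> bool" where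
  "neighbourhood_of X N x \<longleftrightarrow> N \<subseteq> topspace X \<and> (\<exists>V. openin X V \<and> x \<in> V \<and> V \<subseteq> N)"

definition similar_points :: "'a topology \<Rightarrow> 'a \<Rightarrow> 'a \<Rightarrow> bool" where
  "similar_points X x y \<longleftrightarrow>
     (\<exists>Ux Uy h. neighbourhood_of X Ux x \<and> neighbourhood_of X Uy y \<and>
        homeomorphic_map (subtopology X Ux) (subtopology X Uy) h \<and> h x = y)"

definition fully_transitive :: "'a topology \<Rightarrow> bool" where
  "fully_transitive X \<longleftrightarrow>
     (\<forall>xs ys. length xs = length ys \<and> distinct xs \<and> distinct ys \<and>
        set xs \<subseteq> topspace X \<and> set ys \<subseteq> topspace X \<and>
        (\<forall>i<length xs. similar_points X (xs ! i) (ys ! i)) \<longrightarrow>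
        (\<exists>g\<in>Homeo X. \<forall>i<length xs. g (xs ! i) = ys ! i))"

text \<open>A topological group is given by a topology TG (carrier = topspace TG),
  multiplication m and unit e.\<close>

definition locally_convex_tvs :: "'v::real_vector topology \<Rightarrow> bool" where
  "locally_convex_tvs V \<longleftrightarrow>
     topspace V = UNIV \<and> Hausdorff_space V \<and>
     continuous_map (prod_topology V V) V (\<lambda>(x, y). x + y) \<and>
     continuous_map (prod_topology euclideanreal V) V (\<lambda>(a, x). a *\<^sub>R x) \<and>
     (\<forall>x U. openin V U \<and> x \<in> U \<longrightarrow> (\<exists>W. openin V W \<and> convex W \<and> x \<in> W \<and> W \<subseteq> U))"

definition continuous_affine_action ::
  "'g topology \<Rightarrow> ('g \<Rightarrow> 'g \<Rightarrow> 'g) \<Rightarrow> 'g \<Rightarrow> 'v::real_vector topology \<Rightarrow> 'v set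
     \<Rightarrow> ('g \<Rightarrow> 'v \<Rightarrow> 'v) \<Rightarrow> bool" where
  "continuous_affine_action TG m e V K act \<longleftrightarrow>
     (\<forall>g\<in>topspace TG. \<forall>x\<in>K. act g x \<in> K) \<and>
     (\<forall>x\<in>K. act e x = x) \<and>
     (\<forall>g\<in>topspace TG. \<forall>h\<in>topspace TG. \<forall>x\<in>K. act (m g h) x = act g (act h x)) \<and>
     (\<forall>g\<in>topspace TG. \<forall>x\<in>K. \<forall>y\<in>K. \<forall>t::real. 0 \<le> t \<and> t \<le> 1 \<longrightarrow>
        act g (t *\<^sub>R x + (1 - t) *\<^sub>R y) = t *\<^sub>R act g x + (1 - t) *\<^sub>R act g y) \<and>
     continuous_map (prod_topology TG (subtopology V K)) (subtopology V K) (\<lambda>(g, x). act g x)"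

text \<open>Amenability with respect to all locally convex spaces whose underlying vector
  space is the type 'v; the theorem quantifies over all such types 'v.\<close>
definition amenable_wrt ::
  "'g topology \<Rightarrow> ('g \<Rightarrow> 'g \<Rightarrow> 'g) \<Rightarrow> 'g \<Rightarrow> 'v::real_vector itself \<Rightarrow> bool" where
  "amenable_wrt TG m e (_::'v itself) \<longleftrightarrow>
     (\<forall>(V::'v topology) K act.
        locally_convex_tvs V \<and> K \<noteq> {} \<and> compactin V K \<and> convex K \<and>
        continuous_affine_action TG m e V K act \<longrightarrow>
        (\<exists>x\<in>K. \<forall>g\<in>topspace TG. act g x = x))"

definition roelcke_precompact ::
  "'g topology \<Rightarrow> ('g \<Rightarrow> 'g \<Rightarrow> 'g) \<Rightarrow> 'g \<Rightarrow> bool" where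
  "roelcke_precompact TG m e \<longleftrightarrow>
     (\<forall>U. openin TG U \<and> e \<in> U \<longrightarrow>
        (\<exists>F. finite F \<and> F \<subseteq> topspace TG \<and>
           topspace TG = {m (m u f) u' | u f u'. u \<in> U \<and> f \<in> F \<and> u' \<in> U}))"

end

theory Submission
  imports Defs
begin


lemma Homeo_id: "id \<in> Homeo X"
  by (simp add: Homeo_def)

lemma Homeo_comp: "g \<in> Homeo X \<Longrightarrow> h \<in> Homeo X \<Longrightarrow> g \<circ> h \<in> Homeo X"
  unfolding Homeo_def
  by (auto intro: homeomorphic_map_compose)

lemma Homeo_top: "h \<in> Homeo X \<Longrightarrow> x \<in> topspace X \<Longrightarrow> h x \<in> topspace X"
proof -
  assume "h \<in> Homeo X" "x \<in> topspace X"
  then have "h ` topspace X = topspace X"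
    by (intro homeomorphic_imp_surjective_map) (auto simp: Homeo_def)
  then show ?thesis using \<open>x \<in> topspace X\<close> by blast
qed

lemma Homeo_inv:
  assumes "h \<in> Homeo X"
  shows "inv h \<in> Homeo X \<and> h \<circ> inv h = id \<and> inv h \<circ> h = id"
proof -
  have hm: "homeomorphic_map X X h" and out: "\<And>x. x \<notin> topspace X \<Longrightarrow> h x = x"
    using assms by (auto simp: Homeo_def)
  obtain g where g: "homeomorphic_maps X X h g" using hm homeomorphic_map_maps by blast
  define g' where "g' = (\<lambda>x. if x \<in> topspace X then g x else x)"
  have g2: "homeomorphic_maps X X h g'"
    using homeomorphic_maps_eq[OF g, of h g'] by (simp add: g'_def)
  have ht: "\<And>x. x \<in> topspace X \<Longrightarrow> h x \<in> topspace X"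
    by (rule Homeo_top[OF assms])
  have gt: "\<And>x. x \<in> topspace X \<Longrightarrow> g x \<in> topspace X"
  proof -
    have "continuous_map X X g" using g by (simp add: homeomorphic_maps_def)
    then have "g ` topspace X \<subseteq> topspace X" by (rule continuous_map_image_subset_topspace)
    then show "\<And>x. x \<in> topspace X \<Longrightarrow> g x \<in> topspace X" by blast
  qed
  have gh: "\<And>x. x \<in> topspace X \<Longrightarrow> g (h x) = x" and hg: "\<And>x. x \<in> topspace X \<Longrightarrow> h (g x) = x"
    using g unfolding homeomorphic_maps_def by simp_all
  have c1: "h \<circ> g' = id"
  proof
    fix x show "(h \<circ> g') x = id x"
      using hg out gt by (cases "x \<in> topspace X") (simp_all add: g'_def)
  qed
  have c2: "g' \<circ> h = id"
  proof
    fix x show "(g' \<circ> h) x = id x"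
      using gh out ht by (cases "x \<in> topspace X") (simp_all add: g'_def)
  qed
  have "inv h = g'" using inv_unique_comp[OF c1 c2] .
  moreover have "homeomorphic_map X X g'"
    using g2 homeomorphic_maps_sym homeomorphic_maps_imp_map by blast
  then have "g' \<in> Homeo X"
    by (simp add: Homeo_def g'_def)
  ultimately show ?thesis using c1 c2 by simp
qed

lemma topspace_pw: "topspace (pointwise_topology X) = Homeo X"
  unfolding pointwise_topology_def topology_generated_by_topspace
  by auto

lemma open_pw_stab:
  assumes "openin (pointwise_topology X) U" "p \<in> U"
  shows "\<exists>A. finite A \<and> A \<subseteq> topspace X \<and> {h \<in> Homeo X. \<forall>a\<in>A. h a = p a} \<subseteq> U"
proof -
  have "generate_topology_on
       (insert (Homeo X) {{h \<in> Homeo X. h x \<in> U} | x U. x \<in> topspace X \<and> openin X U}) U"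
    using assms(1) unfolding pointwise_topology_def by (rule openin_topology_generated_by)
  then show ?thesis using assms(2)
  proof (induction arbitrary: p)
    case Empty
    then show ?case by simp
  next
    case (Int a b)
    obtain A1 where "finite A1" "A1 \<subseteq> topspace X" "{h \<in> Homeo X. \<forall>a\<in>A1. h a = p a} \<subseteq> a"
      using Int.IH(1)[of p] Int.prems by blast
    moreover obtain A2 where "finite A2" "A2 \<subseteq> topspace X" "{h \<in> Homeo X. \<forall>a\<in>A2. h a = p a} \<subseteq> b"
      using Int.IH(2)[of p] Int.prems by blast
    ultimately show ?case
      by (intro exI[of _ "A1 \<union> A2"]) auto
  next
    case (UN K)
    then obtain k where "k \<in> K" "p \<in> k" by blast
    then obtain A where "finite A" "A \<subseteq> topspace X" "{h \<in> Homeo X. \<forall>a\<in>A. h a = p a} \<subseteq> k"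
      using UN.IH[of k p] by blast
    then show ?case using \<open>k \<in> K\<close> by (intro exI[of _ A]) auto
  next
    case (Basis s)
    then show ?case
    proof (cases "s = Homeo X")
      case True
      then show ?thesis by (intro exI[of _ "{}"]) auto
    next
      case False
      from Basis.hyps False have "s \<in> {{h \<in> Homeo X. h x \<in> U} | x U. x \<in> topspace X \<and> openin X U}"
        by simp
      then obtain x V where s: "s = {h \<in> Homeo X. h x \<in> V}" "x \<in> topspace X"
        by blast
      show ?thesis using s Basis.prems by (intro exI[of _ "{x}"]) auto
    qed
  qed
qed

lemma sim_of_homeo:
  assumes "h \<in> Homeo X" "x \<in> topspace X"
  shows "similar_points X x (h x)"
proof -
  have hm: "homeomorphic_map X X h" using assms(1) by (simp add: Homeo_def)
  have n1: "neighbourhood_of X (topspace X) x"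
    using assms(2) unfolding neighbourhood_of_def by blast
  have n2: "neighbourhood_of X (topspace X) (h x)"
    using Homeo_top[OF assms] unfolding neighbourhood_of_def by blast
  show ?thesis unfolding similar_points_def
    using n1 n2 hm by (intro exI[of _ "topspace X"] exI[of _ "topspace X"] exI[of _ h]) simp
qed

lemma FT:
  assumes ft: "fully_transitive X" and fin: "finite B" and Bt: "B \<subseteq> topspace X"
    and inj: "inj_on s B" and orb: "\<And>b. b \<in> B \<Longrightarrow> \<exists>h\<in>Homeo X. h b = s b"
  shows "\<exists>g\<in>Homeo X. \<forall>b\<in>B. g b = s b"
proof -
  obtain xs where xs: "set xs = B" "distinct xs" using finite_distinct_list[OF fin] by blast
  define ys where "ys = map s xs"
  have st: "\<And>b. b \<in> B \<Longrightarrow> s b \<in> topspace X"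
  proof -
    fix b assume "b \<in> B"
    then obtain h where "h \<in> Homeo X" "h b = s b" using orb by blast
    then show "s b \<in> topspace X" using Homeo_top[of h X b] Bt \<open>b \<in> B\<close> by auto
  qed
  have c1: "length xs = length ys" by (simp add: ys_def)
  have c2: "distinct ys" unfolding ys_def using xs inj by (simp add: distinct_map)
  have c3: "set ys \<subseteq> topspace X" unfolding ys_def using xs st by auto
  have c4: "\<forall>i<length xs. similar_points X (xs ! i) (ys ! i)"
  proof (intro allI impI)
    fix i assume i: "i < length xs"
    then have b: "xs ! i \<in> B" using xs(1) nth_mem by blast
    then obtain h where h: "h \<in> Homeo X" "h (xs ! i) = s (xs ! i)" using orb by blast
    have "similar_points X (xs ! i) (h (xs ! i))"
      using sim_of_homeo[OF h(1)] b Bt by blast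
    then show "similar_points X (xs ! i) (ys ! i)"
      using h(2) i by (simp add: ys_def)
  qed
  note imp = ft[unfolded fully_transitive_def, THEN spec[of _ xs], THEN spec[of _ ys]]
  have "\<exists>g\<in>Homeo X. \<forall>i<length xs. g (xs ! i) = ys ! i"
    apply (rule mp[OF imp])
    apply (intro conjI)
    using c1 c2 c3 c4 xs(1,2) Bt by (simp_all only:)
  then obtain g where g: "g \<in> Homeo X" "\<forall>i<length xs. g (xs ! i) = ys ! i" by blast
  have "\<forall>b\<in>B. g b = s b"
  proof
    fix b assume "b \<in> B"
    then obtain i where i: "i < length xs" "xs ! i = b" using xs(1) in_set_conv_nth[of b xs] by auto
    have "g (xs ! i) = ys ! i" using g(2) i(1) by blast
    then show "g b = s b" using i by (simp add: ys_def)
  qed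
  then show ?thesis using g(1) by blast
qed

lemma Homeo_inv1: "h \<in> Homeo X \<Longrightarrow> h (inv h x) = x"
proof -
  assume "h \<in> Homeo X"
  then have "h \<circ> inv h = id" using Homeo_inv by blast
  then have "(h \<circ> inv h) x = id x" by simp
  then show ?thesis by simp
qed

lemma Homeo_inv2: "h \<in> Homeo X \<Longrightarrow> inv h (h x) = x"
proof -
  assume "h \<in> Homeo X"
  then have "inv h \<circ> h = id" using Homeo_inv by blast
  then have "(inv h \<circ> h) x = id x" by simp
  then show ?thesis by simp
qed

lemma Homeo_inv_in: "h \<in> Homeo X \<Longrightarrow> inv h \<in> Homeo X"
  using Homeo_inv by blast

lemma double_coset:
  assumes ft: "fully_transitive X" and finA: "finite A" and At: "A \<subseteq> topspace X"
    and f: "f \<in> Homeo X" and g: "g \<in> Homeo X"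
    and tp: "\<And>a b. a \<in> A \<Longrightarrow> b \<in> A \<Longrightarrow> f a = b \<longleftrightarrow> g a = b"
  shows "\<exists>v1 v2. v1 \<in> Homeo X \<and> (\<forall>a\<in>A. v1 a = a) \<and> v2 \<in> Homeo X \<and> (\<forall>a\<in>A. v2 a = a)
           \<and> g = v1 \<circ> f \<circ> v2"
proof -
  define B where "B = A \<union> f ` A"
  define s where "s x = (if x \<in> A then x else g (inv f x))" for x
  have finB: "finite B" using finA by (simp add: B_def)
  have Bt: "B \<subseteq> topspace X" using At Homeo_top[OF f] by (auto simp: B_def)
  have sfa: "s (f a) = g a" if a: "a \<in> A" for a
  proof (cases "f a \<in> A")
    case True
    then have "g a = f a" using tp[OF a True] by simp
    then show ?thesis using True by (simp add: s_def)
  next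
    case False
    then show ?thesis by (simp add: s_def Homeo_inv2[OF f])
  qed
  have inj: "inj_on s B"
  proof (rule inj_onI)
    fix x y assume x: "x \<in> B" and y: "y \<in> B" and e: "s x = s y"
    show "x = y"
    proof (cases "x \<in> A"; cases "y \<in> A")
      assume "x \<in> A" "y \<in> A" then show ?thesis using e by (simp add: s_def)
    next
      assume xa: "x \<in> A" and ya: "y \<notin> A"
      then obtain a' where a': "a' \<in> A" "y = f a'" using y by (auto simp: B_def)
      have "g a' = x" using e sfa[OF a'(1)] xa a' by (simp add: s_def)
      then have "f a' = x" using tp[OF a'(1) xa] by simp
      then show ?thesis using a' ya xa by simp
    next
      assume xa: "x \<notin> A" and ya: "y \<in> A"
      then obtain a' where a': "a' \<in> A" "x = f a'" using x by (auto simp: B_def)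
      have "g a' = y" using e sfa[OF a'(1)] ya a' by (simp add: s_def)
      then have "f a' = y" using tp[OF a'(1) ya] by simp
      then show ?thesis using a' ya xa by simp
    next
      assume xa: "x \<notin> A" and ya: "y \<notin> A"
      then obtain a' b' where a': "a' \<in> A" "x = f a'" "b' \<in> A" "y = f b'" using x y by (auto simp: B_def)
      have "g a' = g b'" using e sfa a' by simp
      then have "inv g (g a') = inv g (g b')" by simp
      then have "a' = b'" using Homeo_inv2[OF g] by simp
      then show ?thesis using a' by simp
    qed
  qed
  have orb: "\<exists>h\<in>Homeo X. h b = s b" if b: "b \<in> B" for b
  proof (cases "b \<in> A")
    case True
    then show ?thesis using Homeo_id by (intro bexI[of _ id]) (simp_all add: s_def)
  next
    case False
    have "g \<circ> inv f \<in> Homeo X" using Homeo_comp[OF g Homeo_inv_in[OF f]] .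
    then show ?thesis using False by (intro bexI[of _ "g \<circ> inv f"]) (simp_all add: s_def)
  qed
  obtain v1 where v1: "v1 \<in> Homeo X" "\<forall>b\<in>B. v1 b = s b"
    using FT[OF ft finB Bt inj orb] by blast
  have v1A: "\<forall>a\<in>A. v1 a = a" using v1(2) by (simp add: B_def s_def)
  have v1f: "v1 (f a) = g a" if a: "a \<in> A" for a
    using v1(2) sfa[OF a] a by (simp add: B_def)
  define v2 where "v2 = inv f \<circ> inv v1 \<circ> g"
  have v2: "v2 \<in> Homeo X" unfolding v2_def
    by (intro Homeo_comp Homeo_inv_in f v1(1) g)
  have v2A: "\<forall>a\<in>A. v2 a = a"
  proof
    fix a assume a: "a \<in> A"
    have "inv v1 (g a) = f a" using v1f[OF a] Homeo_inv2[OF v1(1), of "f a"] by simp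
    then show "v2 a = a" using Homeo_inv2[OF f] by (simp add: v2_def)
  qed
  have "g = v1 \<circ> f \<circ> v2"
  proof
    fix x show "g x = (v1 \<circ> f \<circ> v2) x"
      using Homeo_inv1[OF f] Homeo_inv1[OF v1(1)] by (simp add: v2_def)
  qed
  then show ?thesis using v1(1) v1A v2 v2A by blast
qed

lemma roelcke:
  assumes ft: "fully_transitive X"
  shows "roelcke_precompact (pointwise_topology X) (\<circ>) id"
  unfolding roelcke_precompact_def topspace_pw
proof (intro allI impI)
  fix U assume U: "openin (pointwise_topology X) U \<and> id \<in> U"
  then obtain A where A: "finite A" "A \<subseteq> topspace X" "{h \<in> Homeo X. \<forall>a\<in>A. h a = id a} \<subseteq> U"
    using open_pw_stab[of X U id] by blast
  have UH: "U \<subseteq> Homeo X" using openin_subset[of "pointwise_topology X" U] U topspace_pw by auto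
  define tp where "tp g = {(a,b). a \<in> A \<and> b \<in> A \<and> g a = b}" for g :: "'a \<Rightarrow> 'a"
  define rep where "rep t = (SOME g. g \<in> Homeo X \<and> tp g = t)" for t
  define F where "F = rep ` (tp ` Homeo X)"
  have "tp ` Homeo X \<subseteq> Pow (A \<times> A)" by (auto simp: tp_def)
  then have "finite (tp ` Homeo X)" using A(1) by (meson finite_Pow_iff finite_SigmaI rev_finite_subset)
  then have finF: "finite F" by (simp add: F_def)
  have rep: "rep (tp g) \<in> Homeo X \<and> tp (rep (tp g)) = tp g" if "g \<in> Homeo X" for g
  proof -
    have "\<exists>h. h \<in> Homeo X \<and> tp h = tp g" using that by blast
    from someI_ex[OF this] show ?thesis unfolding rep_def .
  qed
  have FH: "F \<subseteq> Homeo X" using rep by (auto simp: F_def)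
  have "Homeo X = {u \<circ> f \<circ> u' |u f u'. u \<in> U \<and> f \<in> F \<and> u' \<in> U}"
  proof
    show "{u \<circ> f \<circ> u' |u f u'. u \<in> U \<and> f \<in> F \<and> u' \<in> U} \<subseteq> Homeo X"
      using UH FH Homeo_comp by blast
  next
    show "Homeo X \<subseteq> {u \<circ> f \<circ> u' |u f u'. u \<in> U \<and> f \<in> F \<and> u' \<in> U}"
    proof
      fix g assume g: "g \<in> Homeo X"
      define f where "f = rep (tp g)"
      have f: "f \<in> Homeo X" "tp f = tp g" using rep[OF g] by (simp_all add: f_def)
      have fF: "f \<in> F" using g by (simp add: F_def f_def)
      have t: "f a = b \<longleftrightarrow> g a = b" if "a \<in> A" "b \<in> A" for a b
      proof -
        have "(a, b) \<in> tp f \<longleftrightarrow> (a, b) \<in> tp g" using f(2) by simp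
        then show ?thesis using that by (simp add: tp_def)
      qed
      obtain v1 v2 where v: "v1 \<in> Homeo X" "\<forall>a\<in>A. v1 a = a" "v2 \<in> Homeo X" "\<forall>a\<in>A. v2 a = a"
        "g = v1 \<circ> f \<circ> v2"
        using double_coset[OF ft A(1) A(2) f(1) g t] by blast
      have "v1 \<in> U" "v2 \<in> U" using v A(3) by auto
      then show "g \<in> {u \<circ> f \<circ> u' |u f u'. u \<in> U \<and> f \<in> F \<and> u' \<in> U}"
        using v(5) fF by blast
    qed
  qed
  then show "\<exists>F. finite F \<and> F \<subseteq> Homeo X \<and> Homeo X = {u \<circ> f \<circ> u' |u f u'. u \<in> U \<and> f \<in> F \<and> u' \<in> U}"
    using finF FH by blast
qed



lemma extend_perm:
  assumes "finite B" "D \<subseteq> B" "inj_on f D" "f ` D \<subseteq> B" "\<forall>x\<in>D. R x (f x)"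
    and refl: "\<And>x. x \<in> B \<Longrightarrow> R x x"
    and sym: "\<And>x y. R x y \<Longrightarrow> R y x" and trans: "\<And>x y z. R x y \<Longrightarrow> R y z \<Longrightarrow> R x z"
  shows "\<exists>l. l permutes B \<and> (\<forall>x\<in>D. l x = f x) \<and> (\<forall>x\<in>B. R x (l x))"
  using assms(1-5)
proof (induction "card (B - D)" arbitrary: D f)
  case 0
  then have DB: "D = B" by auto
  define l where "l x = (if x \<in> B then f x else x)" for x
  have "f ` B = B" using endo_inj_surj[of B f] 0 DB by simp
  then have "bij_betw f B B" using 0 DB by (simp add: bij_betw_def)
  then have "bij_betw l B B" by (rule bij_betw_cong[THEN iffD1, rotated]) (simp add: l_def)
  then have "l permutes B" by (rule bij_imp_permutes) (simp add: l_def)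
  moreover have "\<forall>x\<in>D. l x = f x" using DB by (simp add: l_def)
  moreover have "\<forall>x\<in>B. R x (l x)" using 0 DB by (simp add: l_def)
  ultimately show ?case by blast
next
  case (Suc n)
  then obtain b where b: "b \<in> B" "b \<notin> D"
    by (metis Diff_eq_empty_iff card.empty nat.distinct(1) subsetI)
  define C where "C = {x \<in> B. R b x}"
  have finC: "finite C" using Suc.prems(1) by (simp add: C_def)
  have "\<exists>c. c \<in> C \<and> c \<notin> f ` D"
  proof (rule ccontr)
    assume "\<not> ?thesis"
    then have CfD: "C \<subseteq> f ` D" by blast
    have "C \<subseteq> f ` (D \<inter> C)"
    proof
      fix y assume y: "y \<in> C"
      then obtain x where x: "x \<in> D" "y = f x" using CfD by blast
      have "R b (f x)" using y x by (simp add: C_def)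
      moreover have "R (f x) x" using Suc.prems(5) x(1) sym by blast
      ultimately have "R b x" using trans by blast
      then have "x \<in> C" using x(1) Suc.prems(2) by (auto simp: C_def)
      then show "y \<in> f ` (D \<inter> C)" using x by blast
    qed
    then have "card C \<le> card (f ` (D \<inter> C))" using finC by (meson card_mono finite_imageI finite_subset inf_le2)
    also have "\<dots> \<le> card (D \<inter> C)" using card_image_le finC by blast
    also have "\<dots> < card C"
    proof (rule psubset_card_mono[OF finC])
      have "b \<in> C" using b refl by (simp add: C_def)
      then show "D \<inter> C \<subset> C" using b by blast
    qed
    finally show False by simp
  qed
  then obtain c where c: "c \<in> B" "R b c" "c \<notin> f ` D" by (auto simp: C_def)
  define D' where "D' = insert b D"
  define f' where "f' = f(b := c)"
  have "n = card (B - D')"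
    using Suc.hyps(2) b Suc.prems(1) by (simp add: D'_def Diff_insert2[symmetric] card_Diff_singleton)
  moreover have "D' \<subseteq> B" using b Suc.prems(2) by (simp add: D'_def)
  moreover have "inj_on f' D'"
  proof -
    have "inj_on f' D" using Suc.prems(3) b(2) unfolding f'_def
      by (metis (no_types, lifting) fun_upd_other inj_on_cong)
    moreover have "f' b \<notin> f' ` (D - {b})" using c(3) b(2) by (auto simp: f'_def)
    ultimately show ?thesis by (simp add: D'_def)
  qed
  moreover have "f' ` D' \<subseteq> B" using Suc.prems(4) c(1) b(2) by (auto simp: D'_def f'_def)
  moreover have "\<forall>x\<in>D'. R x (f' x)" using Suc.prems(5) c(2) b(2) by (auto simp: D'_def f'_def)
  ultimately obtain l where l: "l permutes B" "\<forall>x\<in>D'. l x = f' x" "\<forall>x\<in>B. R x (l x)"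
    using Suc.hyps(1) Suc.prems(1) by blast
  have "\<forall>x\<in>D. l x = f x" using l(2) b(2) by (auto simp: D'_def f'_def)
  then show ?case using l by blast
qed



lemma box_cont:
  assumes f: "continuous_map (prod_topology X Y) Z f" and x: "x \<in> topspace X" and y: "y \<in> topspace Y"
    and Ob: "openin Z Ob" and fO: "f (x, y) \<in> Ob"
  shows "\<exists>U W. openin X U \<and> openin Y W \<and> x \<in> U \<and> y \<in> W \<and> (\<forall>u\<in>U. \<forall>w\<in>W. f (u, w) \<in> Ob)"
proof -
  have "openin (prod_topology X Y) {p \<in> topspace (prod_topology X Y). f p \<in> Ob}"
    using openin_continuous_map_preimage[OF f Ob] .
  moreover have "(x, y) \<in> {p \<in> topspace (prod_topology X Y). f p \<in> Ob}" using x y fO by simp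
  ultimately have "\<exists>U W. openin X U \<and> openin Y W \<and> x \<in> U \<and> y \<in> W \<and>
      U \<times> W \<subseteq> {p \<in> topspace (prod_topology X Y). f p \<in> Ob}"
    unfolding openin_prod_topology_alt by simp
  then obtain U W where "openin X U" "openin Y W" "x \<in> U" "y \<in> W"
      "U \<times> W \<subseteq> {p \<in> topspace (prod_topology X Y). f p \<in> Ob}" by blast
  then have "\<forall>u\<in>U. \<forall>w\<in>W. f (u, w) \<in> Ob" by blast
  then show ?thesis using \<open>openin X U\<close> \<open>openin Y W\<close> \<open>x \<in> U\<close> \<open>y \<in> W\<close> by blast
qed

lemma lc_diff:
  fixes V :: "'v::real_vector topology"
  assumes "locally_convex_tvs V"
  shows "continuous_map (prod_topology V V) V (\<lambda>(x, y). x - y)"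
proof -
  have add: "continuous_map (prod_topology V V) V (\<lambda>(x, y). x + y)"
    and sc: "continuous_map (prod_topology euclideanreal V) V (\<lambda>(a, x). a *\<^sub>R x)"
    using assms by (simp_all add: locally_convex_tvs_def)
  have c1: "continuous_map (prod_topology V V) (prod_topology euclideanreal V) (\<lambda>p. (-1, snd p))"
    by (simp add: continuous_map_pairwise o_def continuous_map_snd)
  have c2: "continuous_map (prod_topology V V) V (\<lambda>p. (-1::real) *\<^sub>R snd p)"
    using continuous_map_compose[OF c1 sc] by (simp add: o_def)
  have c3: "continuous_map (prod_topology V V) (prod_topology V V) (\<lambda>p. (fst p, (-1::real) *\<^sub>R snd p))"
    using c2 by (simp add: continuous_map_pairwise o_def continuous_map_fst)
  have "continuous_map (prod_topology V V) V ((\<lambda>(x, y). x + y) \<circ> (\<lambda>p. (fst p, (-1::real) *\<^sub>R snd p)))"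
    using continuous_map_compose[OF c3 add] .
  moreover have "((\<lambda>(x, y). x + y) \<circ> (\<lambda>p. (fst p, (-1::real) *\<^sub>R snd p))) = (\<lambda>(x, y). (x::'v) - y)"
    by (auto simp: fun_eq_iff scaleR_minus_left)
  ultimately show ?thesis by simp
qed

lemma lc_translate_open:
  fixes V :: "'v::real_vector topology"
  assumes lc: "locally_convex_tvs V" and W: "openin V W"
  shows "openin V {p. p - z \<in> W}"
proof -
  have t: "topspace V = UNIV" using lc by (simp add: locally_convex_tvs_def)
  have c1: "continuous_map V (prod_topology V V) (\<lambda>p. (p, z))"
    using t by (simp add: continuous_map_pairwise o_def)
  have "continuous_map V V ((\<lambda>(x, y). x - y) \<circ> (\<lambda>p. (p, z)))"
    using continuous_map_compose[OF c1 lc_diff[OF lc]] .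
  then have "continuous_map V V (\<lambda>p. p - z)" by (simp add: o_def)
  from openin_continuous_map_preimage[OF this W] show ?thesis using t by simp
qed

lemma affine_sum:
  fixes f :: "'v::real_vector \<Rightarrow> 'v"
  assumes K: "convex K"
    and aff: "\<And>x y t. x \<in> K \<Longrightarrow> y \<in> K \<Longrightarrow> 0 \<le> t \<Longrightarrow> t \<le> 1 \<Longrightarrow>
               f (t *\<^sub>R x + (1 - t) *\<^sub>R y) = t *\<^sub>R f x + (1 - t) *\<^sub>R f y"
  shows "finite I \<Longrightarrow> I \<noteq> {} \<Longrightarrow> (\<forall>i\<in>I. 0 \<le> a i) \<Longrightarrow> sum a I = 1 \<Longrightarrow> (\<forall>i\<in>I. x i \<in> K)
    \<Longrightarrow> f (\<Sum>i\<in>I. a i *\<^sub>R x i) = (\<Sum>i\<in>I. a i *\<^sub>R f (x i))"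
proof (induction I arbitrary: a rule: finite_induct)
  case empty
  then show ?case by simp
next
  case (insert i I)
  show ?case
  proof (cases "I = {}")
    case True
    then show ?thesis using insert by simp
  next
    case Ine: False
    have sI: "sum a I = 1 - a i" using insert by simp
    have nn: "\<forall>j\<in>I. 0 \<le> a j" using insert.prems by simp
    show ?thesis
    proof (cases "a i = 1")
      case True
      then have "sum a I = 0" using sI by simp
      then have z: "\<forall>j\<in>I. a j = 0" using sum_nonneg_eq_0_iff[of I a] insert.hyps(1) nn by blast
      have "(\<Sum>j\<in>I. a j *\<^sub>R x j) = 0" using z by simp
      moreover have "(\<Sum>j\<in>I. a j *\<^sub>R f (x j)) = 0" using z by simp
      ultimately show ?thesis using True insert.hyps by simp
    next
      case False
      define s where "s = 1 - a i"
      have "0 \<le> sum a I" using nn by (simp add: sum_nonneg)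
      then have "s \<ge> 0" using sI unfolding s_def by linarith
      moreover have "s \<noteq> 0" using False unfolding s_def by simp
      ultimately have s0: "s > 0" by simp
      define b where "b j = a j / s" for j
      have "sum b I = sum a I / s" unfolding b_def by (simp add: sum_divide_distrib)
      then have sb: "sum b I = 1" using sI s0 unfolding s_def by simp
      have bn: "\<forall>j\<in>I. 0 \<le> b j" using nn s0 by (simp add: b_def)
      have xI: "\<forall>j\<in>I. x j \<in> K" using insert.prems by simp
      define m where "m = (\<Sum>j\<in>I. b j *\<^sub>R x j)"
      have mK: "m \<in> K" unfolding m_def
        by (rule convex_sum[OF insert.hyps(1) K sb]) (use bn xI in auto)
      have fm: "f m = (\<Sum>j\<in>I. b j *\<^sub>R f (x j))"
        unfolding m_def using insert.IH[OF Ine bn sb xI] .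
      have e1: "(\<Sum>j\<in>I. a j *\<^sub>R x j) = s *\<^sub>R m"
        unfolding m_def scaleR_sum_right using s0 by (simp add: b_def)
      have e2: "(\<Sum>j\<in>I. a j *\<^sub>R f (x j)) = s *\<^sub>R f m"
        unfolding fm scaleR_sum_right using s0 by (simp add: b_def)
      have ai: "0 \<le> a i" "a i \<le> 1" using insert.prems s0 by (auto simp: s_def)
      have xi: "x i \<in> K" using insert.prems by simp
      have "f (\<Sum>j\<in>insert i I. a j *\<^sub>R x j) = f (a i *\<^sub>R x i + (1 - a i) *\<^sub>R m)"
        using insert.hyps e1 by (simp add: s_def)
      also have "\<dots> = a i *\<^sub>R f (x i) + (1 - a i) *\<^sub>R f m" using aff[OF xi mK ai] .
      also have "\<dots> = (\<Sum>j\<in>insert i I. a j *\<^sub>R f (x j))"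
        using insert.hyps e2 by (simp add: s_def)
      finally show ?thesis .
    qed
  qed
qed



lemma uniform_small:
  fixes V :: "'v::real_vector topology" and TG :: "'g topology"
  assumes lc: "locally_convex_tvs V" and compK: "compactin V K"
    and act: "continuous_map (prod_topology TG (subtopology V K)) (subtopology V K) (\<lambda>(g, x). act g x)"
    and e: "e \<in> topspace TG" and ae: "\<And>x. x \<in> K \<Longrightarrow> act e x = x"
    and W: "openin V W" "0 \<in> W"
  shows "\<exists>U. openin TG U \<and> e \<in> U \<and> (\<forall>v\<in>U. \<forall>z\<in>K. act v z - z \<in> W)"
proof -
  have tV: "topspace V = UNIV" using lc by (simp add: locally_convex_tvs_def)
  have tK: "topspace (subtopology V K) = K" using tV by simp
  obtain W2 W3 where W23: "openin V W2" "openin V W3" "0 \<in> W2" "0 \<in> W3"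
      "\<forall>p\<in>W2. \<forall>q\<in>W3. (\<lambda>(x, y). x - y) (p, q) \<in> W"
    using box_cont[OF lc_diff[OF lc], of 0 0 W] tV W by auto
  define W1 where "W1 = W2 \<inter> W3"
  have W1: "openin V W1" "0 \<in> W1" using W23 by (auto simp: W1_def)
  have W1W: "p - q \<in> W" if "p \<in> W1" "q \<in> W1" for p q
    using W23(5) that by (auto simp: W1_def)
  have loc: "\<exists>UT. openin TG (fst UT) \<and> e \<in> fst UT \<and> openin V (snd UT) \<and> z \<in> snd UT \<and>
        (\<forall>v\<in>fst UT. \<forall>z'\<in>K \<inter> snd UT. act v z' - z' \<in> W)" if z: "z \<in> K" for z
  proof -
    define Oz where "Oz = {p. p - z \<in> W1}"
    have Oz: "openin V Oz" unfolding Oz_def by (rule lc_translate_open[OF lc W1(1)])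
    have "openin (subtopology V K) (Oz \<inter> K)" using Oz by (auto simp: openin_subtopology)
    moreover have "(\<lambda>(g, x). act g x) (e, z) \<in> Oz \<inter> K" using z ae W1(2) by (simp add: Oz_def)
    ultimately obtain U N where UN: "openin TG U" "openin (subtopology V K) N" "e \<in> U" "z \<in> N"
        "\<forall>u\<in>U. \<forall>w\<in>N. (\<lambda>(g, x). act g x) (u, w) \<in> Oz \<inter> K"
      using box_cont[OF act e, of z "Oz \<inter> K"] z tK by auto
    obtain T where T: "openin V T" "N = T \<inter> K" using UN(2) by (auto simp: openin_subtopology)
    have "\<forall>v\<in>U. \<forall>z'\<in>K \<inter> (T \<inter> Oz). act v z' - z' \<in> W"
    proof (intro ballI)
      fix v z' assume v: "v \<in> U" and z': "z' \<in> K \<inter> (T \<inter> Oz)"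
      have "act v z' \<in> Oz" using UN(5) v z' T(2) by auto
      then have a: "act v z' - z \<in> W1" by (simp add: Oz_def)
      have b: "z' - z \<in> W1" using z' by (simp add: Oz_def)
      have "(act v z' - z) - (z' - z) \<in> W" using W1W[OF a b] .
      then show "act v z' - z' \<in> W" by simp
    qed
    moreover have "openin V (T \<inter> Oz)" using T(1) Oz by blast
    moreover have "z \<in> T \<inter> Oz" using UN(4) T(2) W1(2) by (simp add: Oz_def)
    ultimately show ?thesis using UN(1,3) by (intro exI[of _ "(U, T \<inter> Oz)"]) simp
  qed
  define P where "P z UT \<longleftrightarrow> openin TG (fst UT) \<and> e \<in> fst UT \<and> openin V (snd UT) \<and> z \<in> snd UT \<and>
        (\<forall>v\<in>fst UT. \<forall>z'\<in>K \<inter> snd UT. act v z' - z' \<in> W)" for z UT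
  have "\<forall>z\<in>K. \<exists>UT. P z UT"
  proof
    fix z assume "z \<in> K"
    show "\<exists>UT. P z UT" using loc[OF \<open>z \<in> K\<close>] unfolding P_def .
  qed
  then obtain UT where UTP: "\<forall>z\<in>K. P z (UT z)" using bchoice by blast
  have UT1: "openin TG (fst (UT z))" "e \<in> fst (UT z)" "openin V (snd (UT z))" "z \<in> snd (UT z)"
    if "z \<in> K" for z using UTP that unfolding P_def by blast+
  have UT2: "act v z' - z' \<in> W" if "z \<in> K" "v \<in> fst (UT z)" "z' \<in> K" "z' \<in> snd (UT z)" for z v z'
    using UTP that unfolding P_def by blast
  have "K \<subseteq> \<Union> ((\<lambda>z. snd (UT z)) ` K)" using UT1(4) by blast
  moreover have "\<forall>C\<in>(\<lambda>z. snd (UT z)) ` K. openin V C" using UT1(3) by blast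
  ultimately obtain \<F> where F: "finite \<F>" "\<F> \<subseteq> (\<lambda>z. snd (UT z)) ` K" "K \<subseteq> \<Union>\<F>"
    using compK unfolding compactin_def by meson
  obtain Z where Z: "Z \<subseteq> K" "finite Z" "\<F> = (\<lambda>z. snd (UT z)) ` Z"
    using finite_subset_image[OF F(1,2)] by blast
  define U where "U = topspace TG \<inter> \<Inter> ((\<lambda>z. fst (UT z)) ` Z)"
  have "openin TG U" unfolding U_def
    by (rule openin_Int_Inter) (use Z UT1(1) in auto)
  moreover have "e \<in> U" using e UT1(2) Z(1) by (auto simp: U_def)
  moreover have "\<forall>v\<in>U. \<forall>z\<in>K. act v z - z \<in> W"
  proof (intro ballI)
    fix v z assume v: "v \<in> U" and z: "z \<in> K"
    then obtain z0 where z0: "z0 \<in> Z" "z \<in> snd (UT z0)" using F(3) Z(3) by blast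
    have "v \<in> fst (UT z0)" using v z0(1) by (auto simp: U_def)
    then show "act v z - z \<in> W" using UT2[of z0 v z] z0 Z(1) z by blast
  qed
  ultimately show ?thesis by blast
qed



lemma core:
  fixes V :: "'v::real_vector topology" and act :: "('a \<Rightarrow> 'a) \<Rightarrow> 'v \<Rightarrow> 'v" and X :: "'a topology"
  assumes ft: "fully_transitive X" and lc: "locally_convex_tvs V"
    and Kne: "K \<noteq> {}" and compK: "compactin V K" and convK: "convex K"
    and caa: "continuous_affine_action (pointwise_topology X) (\<circ>) id V K act"
    and E: "finite E" "E \<subseteq> Homeo X"
    and W: "openin V W" "convex W" "0 \<in> W"
  shows "\<exists>y\<in>K. \<forall>g\<in>E. act g y - y \<in> W"
proof -
  note cc = caa[unfolded continuous_affine_action_def topspace_pw]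
  have c1: "\<And>g x. g \<in> Homeo X \<Longrightarrow> x \<in> K \<Longrightarrow> act g x \<in> K"
    using conjunct1[OF cc, rule_format] .
  have c2: "\<And>x. x \<in> K \<Longrightarrow> act id x = x"
    using conjunct1[OF conjunct2[OF cc], rule_format] .
  have c3: "\<And>g h x. g \<in> Homeo X \<Longrightarrow> h \<in> Homeo X \<Longrightarrow> x \<in> K \<Longrightarrow> act (g \<circ> h) x = act g (act h x)"
    using conjunct1[OF conjunct2[OF conjunct2[OF cc]], rule_format] .
  have c4: "\<And>g x y t. g \<in> Homeo X \<Longrightarrow> x \<in> K \<Longrightarrow> y \<in> K \<Longrightarrow> 0 \<le> t \<Longrightarrow> t \<le> 1 \<Longrightarrow>
              act g (t *\<^sub>R x + (1 - t) *\<^sub>R y) = t *\<^sub>R act g x + (1 - t) *\<^sub>R act g y"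
    using conjunct1[OF conjunct2[OF conjunct2[OF conjunct2[OF cc]]], rule_format, OF _ _ _ conjI] .
  have c5: "continuous_map (prod_topology (pointwise_topology X) (subtopology V K)) (subtopology V K) (\<lambda>(g, x). act g x)"
    using conjunct2[OF conjunct2[OF conjunct2[OF conjunct2[OF cc]]]] .
  have "\<exists>U. openin (pointwise_topology X) U \<and> id \<in> U \<and> (\<forall>v\<in>U. \<forall>z\<in>K. act v z - z \<in> W)"
    by (rule uniform_small[OF lc compK c5]) (simp_all add: topspace_pw Homeo_id c2 W(1,3))
  then obtain U where U: "openin (pointwise_topology X) U" "id \<in> U" "\<forall>v\<in>U. \<forall>z\<in>K. act v z - z \<in> W"
    by blast
  obtain A where A: "finite A" "A \<subseteq> topspace X" "{h \<in> Homeo X. \<forall>a\<in>A. h a = id a} \<subseteq> U"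
    using open_pw_stab[OF U(1,2)] by blast
  define B where "B = A \<union> (\<Union>g\<in>E. inv g ` A)"
  have finB: "finite B" using A(1) E(1) by (simp add: B_def)
  have Bt: "B \<subseteq> topspace X"
  proof -
    have "inv g ` A \<subseteq> topspace X" if g: "g \<in> E" for g
    proof
      fix x assume "x \<in> inv g ` A"
      then obtain a where a: "a \<in> A" "x = inv g a" by blast
      have gH: "g \<in> Homeo X" using g E(2) by blast
      show "x \<in> topspace X" using Homeo_top[OF Homeo_inv_in[OF gH], of a] a A(2) by blast
    qed
    then show ?thesis using A(2) by (auto simp: B_def)
  qed
  define R where "R x y \<longleftrightarrow> (\<exists>h\<in>Homeo X. h x = y)" for x y
  have Rrefl: "R x x" for x using Homeo_id unfolding R_def by (intro bexI[of _ id]) auto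
  have Rsym: "R y x" if r: "R x y" for x y
  proof -
    obtain h where h: "h \<in> Homeo X" "h x = y" using r unfolding R_def by blast
    have "inv h y = x" using h Homeo_inv2[OF h(1)] by blast
    then show ?thesis unfolding R_def using Homeo_inv_in[OF h(1)] by blast
  qed
  have Rtrans: "R x z" if r1: "R x y" and r2: "R y z" for x y z
  proof -
    obtain h where h: "h \<in> Homeo X" "h x = y" using r1 unfolding R_def by blast
    obtain k where k: "k \<in> Homeo X" "k y = z" using r2 unfolding R_def by blast
    have "(k \<circ> h) x = z" using h k by simp
    then show ?thesis unfolding R_def using Homeo_comp[OF k(1) h(1)] by blast
  qed
  define P where "P = {\<sigma>. \<sigma> permutes B \<and> (\<forall>x\<in>B. R x (\<sigma> x))}"
  have finP: "finite P" unfolding P_def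
    by (rule finite_subset[OF _ finite_permutations[OF finB]]) blast
  have idP: "id \<in> P" unfolding P_def using Rrefl by simp
  have Pne: "P \<noteq> {}" using idP by blast
  define gs where "gs \<sigma> = (SOME h. h \<in> Homeo X \<and> (\<forall>b\<in>B. h b = \<sigma> b))" for \<sigma>
  have gs: "gs \<sigma> \<in> Homeo X \<and> (\<forall>b\<in>B. gs \<sigma> b = \<sigma> b)" if s: "\<sigma> \<in> P" for \<sigma>
  proof -
    have perm: "\<sigma> permutes B" and cl: "\<forall>x\<in>B. R x (\<sigma> x)" using s by (simp_all add: P_def)
    have "\<exists>h\<in>Homeo X. \<forall>b\<in>B. h b = \<sigma> b"
    proof (rule FT[OF ft finB Bt])
      show "inj_on \<sigma> B" using permutes_inj_on[OF perm] .
      show "\<exists>h\<in>Homeo X. h b = \<sigma> b" if "b \<in> B" for b using cl that unfolding R_def by blast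
    qed
    then have "\<exists>h. h \<in> Homeo X \<and> (\<forall>b\<in>B. h b = \<sigma> b)" by blast
    from someI_ex[OF this] show ?thesis unfolding gs_def .
  qed
  obtain k0 where k0: "k0 \<in> K" using Kne by blast
  define z where "z \<sigma> = act (gs \<sigma>) k0" for \<sigma>
  have zK: "z \<sigma> \<in> K" if "\<sigma> \<in> P" for \<sigma> using c1[OF conjunct1[OF gs[OF that]] k0] by (simp add: z_def)
  define N where "N = card P"
  have N0: "N > 0" using finP Pne by (simp add: N_def card_gt_0_iff)
  have sum1: "(\<Sum>\<sigma>\<in>P. 1 / real N) = 1" using N0 by (simp add: N_def)
  have nn: "\<And>\<sigma>. \<sigma> \<in> P \<Longrightarrow> 0 \<le> 1 / real N" by simp
  define y where "y = (\<Sum>\<sigma>\<in>P. (1 / real N) *\<^sub>R z \<sigma>)"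
  have yK: "y \<in> K" unfolding y_def by (rule convex_sum[OF finP convK sum1 nn zK])
  have "\<forall>g\<in>E. act g y - y \<in> W"
  proof
    fix g assume gE: "g \<in> E"
    have gH: "g \<in> Homeo X" using gE E(2) by blast
    define D where "D = inv g ` A"
    have DB: "D \<subseteq> B" using gE by (auto simp: D_def B_def)
    have injg: "inj_on g D" by (rule inj_onI) (metis Homeo_inv2[OF gH])
    have gD: "g ` D \<subseteq> B" using Homeo_inv1[OF gH] by (auto simp: D_def B_def)
    have RD: "\<forall>x\<in>D. R x (g x)" using gH unfolding R_def by blast
    obtain l where l: "l permutes B" "\<forall>x\<in>D. l x = g x" "\<forall>x\<in>B. R x (l x)"
    proof -
      have "\<exists>l. l permutes B \<and> (\<forall>x\<in>D. l x = g x) \<and> (\<forall>x\<in>B. R x (l x))"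
        apply (rule extend_perm[where B=B and D=D and f=g and R=R, OF finB DB injg gD RD])
          apply (rule Rrefl)
         apply (erule Rsym)
        apply (erule (1) Rtrans)
        done
      then show ?thesis using that by blast
    qed
    define \<tau> where "\<tau> \<sigma> = l \<circ> \<sigma>" for \<sigma> :: "'a \<Rightarrow> 'a"
    have \<tau>P: "\<tau> \<sigma> \<in> P" if s: "\<sigma> \<in> P" for \<sigma>
    proof -
      have perm: "\<sigma> permutes B" and cl: "\<forall>x\<in>B. R x (\<sigma> x)" using s by (simp_all add: P_def)
      have "\<tau> \<sigma> permutes B" unfolding \<tau>_def by (rule permutes_compose[OF perm l(1)])
      moreover have "\<forall>x\<in>B. R x (\<tau> \<sigma> x)"
      proof
        fix x assume x: "x \<in> B"
        have "\<sigma> x \<in> B" using permutes_in_image[OF perm] x by simp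
        then have "R (\<sigma> x) (l (\<sigma> x))" using l(3) by blast
        moreover have "R x (\<sigma> x)" using cl x by blast
        ultimately show "R x (\<tau> \<sigma> x)" using Rtrans[of x "\<sigma> x" "l (\<sigma> x)"] by (simp add: \<tau>_def)
      qed
      ultimately show ?thesis by (simp add: P_def)
    qed
    have linvP: "inv l \<circ> \<sigma> \<in> P" if s: "\<sigma> \<in> P" for \<sigma>
    proof -
      have perm: "\<sigma> permutes B" and cl: "\<forall>x\<in>B. R x (\<sigma> x)" using s by (simp_all add: P_def)
      have il: "inv l permutes B" using permutes_inv[OF l(1)] .
      have "inv l \<circ> \<sigma> permutes B" by (rule permutes_compose[OF perm il])
      moreover have "\<forall>x\<in>B. R x ((inv l \<circ> \<sigma>) x)"
      proof
        fix x assume x: "x \<in> B"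
        have "\<sigma> x \<in> B" using permutes_in_image[OF perm] x by simp
        then have "inv l (\<sigma> x) \<in> B" using permutes_in_image[OF il] by simp
        then have "R (inv l (\<sigma> x)) (l (inv l (\<sigma> x)))" using l(3) by blast
        then have "R (inv l (\<sigma> x)) (\<sigma> x)" using permutes_inverses(1)[OF l(1)] by simp
        then have "R (\<sigma> x) (inv l (\<sigma> x))" by (rule Rsym)
        moreover have "R x (\<sigma> x)" using cl x by blast
        ultimately show "R x ((inv l \<circ> \<sigma>) x)" using Rtrans[of x "\<sigma> x" "inv l (\<sigma> x)"] by simp
      qed
      ultimately show ?thesis by (simp add: P_def)
    qed
    have bij: "bij_betw \<tau> P P"
    proof (rule bij_betwI[of _ _ _ "\<lambda>\<sigma>. inv l \<circ> \<sigma>"])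
      show "\<tau> \<in> P \<rightarrow> P" using \<tau>P by blast
      show "(\<lambda>\<sigma>. inv l \<circ> \<sigma>) \<in> P \<rightarrow> P" using linvP by blast
      show "inv l \<circ> \<tau> x = x" for x
        by (simp add: \<tau>_def fun_eq_iff permutes_inverses(2)[OF l(1)])
      show "\<tau> (inv l \<circ> y) = y" for y
        by (simp add: \<tau>_def fun_eq_iff permutes_inverses(1)[OF l(1)])
    qed
    define v where "v \<sigma> = g \<circ> gs \<sigma> \<circ> inv (gs (\<tau> \<sigma>))" for \<sigma>
    have vU: "v \<sigma> \<in> U" if s: "\<sigma> \<in> P" for \<sigma>
    proof -
      have perm: "\<sigma> permutes B" using s by (simp add: P_def)
      have g1: "gs \<sigma> \<in> Homeo X" "\<forall>b\<in>B. gs \<sigma> b = \<sigma> b" using gs[OF s] by simp_all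
      have g2: "gs (\<tau> \<sigma>) \<in> Homeo X" "\<forall>b\<in>B. gs (\<tau> \<sigma>) b = \<tau> \<sigma> b" using gs[OF \<tau>P[OF s]] by simp_all
      have vH: "v \<sigma> \<in> Homeo X" unfolding v_def
        by (intro Homeo_comp Homeo_inv_in gH g1(1) g2(1))
      have "v \<sigma> a = a" if a: "a \<in> A" for a
      proof -
        define ga where "ga = inv g a"
        have gaD: "ga \<in> D" using a by (simp add: ga_def D_def)
        have gaB: "ga \<in> B" using gaD DB by blast
        define x0 where "x0 = inv \<sigma> ga"
        have x0B: "x0 \<in> B" using permutes_in_image[OF permutes_inv[OF perm]] gaB by (simp add: x0_def)
        have sx0: "\<sigma> x0 = ga" using permutes_inverses(1)[OF perm] by (simp add: x0_def)
        have "\<tau> \<sigma> x0 = a"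
          using sx0 l(2) gaD Homeo_inv1[OF gH] by (simp add: \<tau>_def ga_def)
        then have "gs (\<tau> \<sigma>) x0 = a" using g2(2) x0B by simp
        then have "inv (gs (\<tau> \<sigma>)) a = x0" using Homeo_inv2[OF g2(1)] by metis
        moreover have "gs \<sigma> x0 = ga" using g1(2) x0B sx0 by simp
        ultimately show "v \<sigma> a = a" using Homeo_inv1[OF gH] by (simp add: v_def ga_def)
      qed
      then show ?thesis using vH A(3) by auto
    qed
    have actz: "act g (z \<sigma>) = act (v \<sigma>) (z (\<tau> \<sigma>))" if s: "\<sigma> \<in> P" for \<sigma>
    proof -
      have g1: "gs \<sigma> \<in> Homeo X" using gs[OF s] by simp
      have g2: "gs (\<tau> \<sigma>) \<in> Homeo X" using gs[OF \<tau>P[OF s]] by simp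
      have vH: "v \<sigma> \<in> Homeo X" using vU[OF s] U(1) openin_subset topspace_pw by blast
      have eq: "g \<circ> gs \<sigma> = v \<sigma> \<circ> gs (\<tau> \<sigma>)"
        by (simp add: v_def fun_eq_iff Homeo_inv2[OF g2])
      have "act g (z \<sigma>) = act (g \<circ> gs \<sigma>) k0" unfolding z_def using c3[OF gH g1 k0] by simp
      also have "\<dots> = act (v \<sigma> \<circ> gs (\<tau> \<sigma>)) k0" using eq by simp
      also have "\<dots> = act (v \<sigma>) (z (\<tau> \<sigma>))" unfolding z_def using c3[OF vH g2 k0] .
      finally show ?thesis .
    qed
    have "act g y = (\<Sum>\<sigma>\<in>P. (1 / real N) *\<^sub>R act g (z \<sigma>))"
      unfolding y_def
      by (rule affine_sum[OF convK c4[OF gH] finP Pne]) (use sum1 zK in auto)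
    also have "\<dots> = (\<Sum>\<sigma>\<in>P. (1 / real N) *\<^sub>R act (v \<sigma>) (z (\<tau> \<sigma>)))"
      by (rule sum.cong) (simp_all add: actz)
    finally have ay: "act g y = (\<Sum>\<sigma>\<in>P. (1 / real N) *\<^sub>R act (v \<sigma>) (z (\<tau> \<sigma>)))" .
    have y2: "y = (\<Sum>\<sigma>\<in>P. (1 / real N) *\<^sub>R z (\<tau> \<sigma>))"
      unfolding y_def using sum.reindex_bij_betw[OF bij, of "\<lambda>\<sigma>. (1 / real N) *\<^sub>R z \<sigma>"] by simp
    have "act g y - y = (\<Sum>\<sigma>\<in>P. (1 / real N) *\<^sub>R act (v \<sigma>) (z (\<tau> \<sigma>))) - (\<Sum>\<sigma>\<in>P. (1 / real N) *\<^sub>R z (\<tau> \<sigma>))"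
      by (rule arg_cong2[where f="(-)", OF ay y2])
    also have "\<dots> = (\<Sum>\<sigma>\<in>P. (1 / real N) *\<^sub>R (act (v \<sigma>) (z (\<tau> \<sigma>)) - z (\<tau> \<sigma>)))"
      by (simp add: sum_subtractf scaleR_diff_right)
    also have "\<dots> \<in> W"
    proof (rule convex_sum[OF finP W(2) sum1 nn])
      fix \<sigma> assume s: "\<sigma> \<in> P"
      show "act (v \<sigma>) (z (\<tau> \<sigma>)) - z (\<tau> \<sigma>) \<in> W"
        using U(3) vU[OF s] zK[OF \<tau>P[OF s]] by blast
    qed
    finally show "act g y - y \<in> W" .
  qed
  then show ?thesis using yK by blast
qed



lemma amen:
  fixes X :: "'a topology"
  assumes ft: "fully_transitive X"
  shows "amenable_wrt (pointwise_topology X) (\<circ>) id TYPE('v::real_vector)"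
  unfolding amenable_wrt_def
proof (intro allI impI)
  fix V :: "'v topology" and K and act :: "('a \<Rightarrow> 'a) \<Rightarrow> 'v \<Rightarrow> 'v"
  assume H: "locally_convex_tvs V \<and> K \<noteq> {} \<and> compactin V K \<and> convex K \<and>
             continuous_affine_action (pointwise_topology X) (\<circ>) id V K act"
  have lc: "locally_convex_tvs V" and Kne: "K \<noteq> {}" and compK: "compactin V K" and convK: "convex K"
    and caa: "continuous_affine_action (pointwise_topology X) (\<circ>) id V K act"
    using H by simp_all
  have tV: "topspace V = UNIV" and haus: "Hausdorff_space V"
    and lconv: "\<And>x U. openin V U \<Longrightarrow> x \<in> U \<Longrightarrow> \<exists>W. openin V W \<and> convex W \<and> x \<in> W \<and> W \<subseteq> U"
  proof -
    note lcd = lc[unfolded locally_convex_tvs_def]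
    show "topspace V = UNIV" using conjunct1[OF lcd] .
    show "Hausdorff_space V" using conjunct1[OF conjunct2[OF lcd]] .
    show "\<And>x U. openin V U \<Longrightarrow> x \<in> U \<Longrightarrow> \<exists>W. openin V W \<and> convex W \<and> x \<in> W \<and> W \<subseteq> U"
      using conjunct2[OF conjunct2[OF conjunct2[OF conjunct2[OF lcd]]], rule_format, OF conjI] .
  qed
  note cc = caa[unfolded continuous_affine_action_def topspace_pw]
  have c1: "\<And>g x. g \<in> Homeo X \<Longrightarrow> x \<in> K \<Longrightarrow> act g x \<in> K"
    using conjunct1[OF cc, rule_format] .
  have c5: "continuous_map (prod_topology (pointwise_topology X) (subtopology V K)) (subtopology V K) (\<lambda>(g, x). act g x)"
    using conjunct2[OF conjunct2[OF conjunct2[OF conjunct2[OF cc]]]] .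
  have tK: "topspace (subtopology V K) = K" using tV by simp
  show "\<exists>x\<in>K. \<forall>g\<in>topspace (pointwise_topology X). act g x = x"
  proof (rule ccontr)
    assume nf: "\<not> (\<exists>x\<in>K. \<forall>g\<in>topspace (pointwise_topology X). act g x = x)"
    have loc: "\<exists>gTW. fst gTW \<in> Homeo X \<and> openin V (fst (snd gTW)) \<and> k \<in> fst (snd gTW) \<and>
       openin V (snd (snd gTW)) \<and> 0 \<in> snd (snd gTW) \<and>
       (\<forall>y\<in>K \<inter> fst (snd gTW). act (fst gTW) y - y \<notin> snd (snd gTW))" if k: "k \<in> K" for k
    proof -
      have "\<exists>g\<in>topspace (pointwise_topology X). act g k \<noteq> k" using nf k by blast
      then obtain g where g: "g \<in> Homeo X" "act g k \<noteq> k" unfolding topspace_pw by blast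
      have gkK: "act g k \<in> K" using c1[OF g(1) k] .
      note hh = haus[unfolded Hausdorff_space_def, THEN spec[of _ "act g k"], THEN spec[of _ k]]
      have "\<exists>P Q. openin V P \<and> openin V Q \<and> act g k \<in> P \<and> k \<in> Q \<and> disjnt P Q"
        by (rule mp[OF hh]) (simp add: tV g(2))
      then obtain P Q where PQ: "openin V P" "openin V Q" "act g k \<in> P" "k \<in> Q" "disjnt P Q"
        by blast
      have "\<exists>P' W. openin V P' \<and> openin V W \<and> act g k \<in> P' \<and> 0 \<in> W \<and>
               (\<forall>u\<in>P'. \<forall>w\<in>W. (\<lambda>(x, y). x - y) (u, w) \<in> P)"
        by (rule box_cont[OF lc_diff[OF lc]]) (simp_all add: tV PQ(1,3))
      then obtain P' W where PW: "openin V P'" "openin V W" "act g k \<in> P'" "0 \<in> W"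
          "\<forall>u\<in>P'. \<forall>w\<in>W. u - w \<in> P" by auto
      have cg: "continuous_map (subtopology V K) (subtopology V K) (act g)"
      proof -
        have "continuous_map (subtopology V K) (prod_topology (pointwise_topology X) (subtopology V K)) (\<lambda>x. (g, x))"
          using g(1) by (simp add: continuous_map_pairwise o_def topspace_pw)
        from continuous_map_compose[OF this c5] show ?thesis by (simp add: o_def)
      qed
      have "openin (subtopology V K) (P' \<inter> K)" using PW(1) by (auto simp: openin_subtopology)
      from openin_continuous_map_preimage[OF cg this]
      have "openin (subtopology V K) {x \<in> K. act g x \<in> P' \<inter> K}" using tK tV by simp
      then obtain T0 where T0: "openin V T0" "{x \<in> K. act g x \<in> P' \<inter> K} = T0 \<inter> K"
        by (auto simp: openin_subtopology)
      define T where "T = T0 \<inter> Q"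
      have T: "openin V T" "k \<in> T" using T0 PQ(2,4) PW(3) gkK k unfolding T_def by blast+
      have "\<forall>y\<in>K \<inter> T. act g y - y \<notin> W"
      proof (intro ballI notI)
        fix y assume y: "y \<in> K \<inter> T" and yw: "act g y - y \<in> W"
        have "y \<in> T0 \<inter> K" using y by (simp add: T_def)
        then have "act g y \<in> P'" using T0(2) by blast
        then have "act g y - (act g y - y) \<in> P" using PW(5) yw by blast
        then have "y \<in> P" by simp
        moreover have "y \<in> Q" using y by (simp add: T_def)
        ultimately show False using PQ(5) by (auto simp: disjnt_def)
      qed
      then show ?thesis using g(1) T PW(2,4) by (intro exI[of _ "(g, T, W)"]) simp
    qed
    define Pr where "Pr k gTW \<longleftrightarrow> fst gTW \<in> Homeo X \<and> openin V (fst (snd gTW)) \<and> k \<in> fst (snd gTW) \<and>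
       openin V (snd (snd gTW)) \<and> 0 \<in> snd (snd gTW) \<and>
       (\<forall>y\<in>K \<inter> fst (snd gTW). act (fst gTW) y - y \<notin> snd (snd gTW))" for k gTW
    have "\<forall>k\<in>K. \<exists>gTW. Pr k gTW"
    proof
      fix k assume "k \<in> K"
      show "\<exists>gTW. Pr k gTW" using loc[OF \<open>k \<in> K\<close>] unfolding Pr_def .
    qed
    then obtain F where FP: "\<forall>k\<in>K. Pr k (F k)" using bchoice by blast
    define gg where "gg k = fst (F k)" for k
    define TT where "TT k = fst (snd (F k))" for k
    define WW where "WW k = snd (snd (F k))" for k
    have F1: "gg k \<in> Homeo X" "openin V (TT k)" "k \<in> TT k" "openin V (WW k)" "0 \<in> WW k"
      if "k \<in> K" for k using FP that unfolding Pr_def gg_def TT_def WW_def by blast+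
    have F2: "act (gg k) y - y \<notin> WW k" if "k \<in> K" "y \<in> K" "y \<in> TT k" for k y
      using FP that unfolding Pr_def gg_def TT_def WW_def by blast
    have "K \<subseteq> \<Union> (TT ` K)" using F1(3) by blast
    moreover have "\<forall>C\<in>TT ` K. openin V C" using F1(2) by blast
    ultimately obtain \<F> where Fin: "finite \<F>" "\<F> \<subseteq> TT ` K" "K \<subseteq> \<Union>\<F>"
      using compK unfolding compactin_def by meson
    obtain Z where Z: "Z \<subseteq> K" "finite Z" "\<F> = TT ` Z"
      using finite_subset_image[OF Fin(1,2)] by blast
    define W0 where "W0 = topspace V \<inter> \<Inter> (WW ` Z)"
    have W0: "openin V W0" unfolding W0_def
      by (rule openin_Int_Inter) (use Z F1(4) in auto)
    have W00: "0 \<in> W0" using F1(5) Z(1) tV by (auto simp: W0_def)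
    obtain Wc where Wc: "openin V Wc" "convex Wc" "0 \<in> Wc" "Wc \<subseteq> W0"
      using lconv[OF W0 W00] by blast
    have E: "finite (gg ` Z)" "gg ` Z \<subseteq> Homeo X" using Z F1(1) by auto
    obtain y where y: "y \<in> K" "\<forall>g\<in>gg ` Z. act g y - y \<in> Wc"
      using core[OF ft lc Kne compK convK caa E Wc(1,2,3)] by blast
    obtain z where z: "z \<in> Z" "y \<in> TT z" using Fin(3) Z(3) y(1) by blast
    have "act (gg z) y - y \<in> Wc" using y(2) z(1) by blast
    then have "act (gg z) y - y \<in> WW z" using Wc(4) z(1) by (auto simp: W0_def)
    then show False using F2[of z y] z Z(1) y(1) by blast
  qed
qed


theorem theorem14:
  fixes X :: "'a topology"
  assumes "scattered_space X"
    and "fully_transitive X"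
  shows "amenable_wrt (pointwise_topology X) (\<circ>) id TYPE('v::real_vector)
         \<and> roelcke_precompact (pointwise_topology X) (\<circ>) id"
  using amen[OF assms(2)] roelcke[OF assms(2)] by blast

end
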